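(* Assume $0<\rho_{\ell-1,\ell}<1$ for $\ell=1,\dots,L$. For every $k\ge1$ and every $\ell=2,\dots,L+1$, $$q_{k,\ell}=\alpha_{k,\ell}\cdot\prod_{j=1}^{\ell-1}\Lambda_{k,j}\cdot\prod_{m=0}^{k-2}(1+\zeta_{m,\ell}),$$ where $\Lambda_{k,j}=\prod_{m=1}^kL_{m,j}$, $$\alpha_{k,\ell}=\Big(\frac{1-\rho_{\ell-1,\ell}}{1-\rho}\Big)^k\prod_{j=1}^{\ell-2}\rho_{j,j+1}\cdot\sum_{j=0}^{\ell-1}\frac{1-\rho_{j,j+1}}{1-\rho},$$ $$\zeta_{m,\ell}=\frac{1}{(1-\rho_{\ell-1,\ell})\prod_{j=1}^{\ell-1}L_{m+1,j}}\cdot\frac{\sum_{j=1}^{\ell-1}q_{m,j}\,w_j^\ell\,C_{m+1,j,\ell}}{\sum_{j=1}^{\ell}q_{m,j}\,w_j^\ell},$$ $$B_{m,n,\ell}=\sum_{p=n-1}^{\ell-1}(1-\rho_{p,p+1})\prod_{j=1}^pL_{m,j},\qquad C_{m,n,\ell}=B_{m,n,\ell}-(1-\rho_{\ell-1,\ell})\prod_{j=1}^{\ell-1}L_{m,j}\quad(1\le n\le\ell),$$ and an empty product equals $1$.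
   Context: Model. Fix an integer $L\ge1$, $\rho\in(0,1)$ and $\rho_{\ell-1,\ell}$ ($\ell=2,\dots,L$); put $\rho_{0,1}=\rho$ and $\rho_{L,L+1}=0$. Change-points: $P(\Gamma_1=m)=\rho(1-\rho)^m$, $m\ge0$; $\Gamma_\ell=\Gamma_{\ell-1}+G_\ell$ with independent $G_\ell$, $P(G_\ell=m)=\rho_{\ell-1,\ell}(1-\rho_{\ell-1,\ell})^m$. Observations $Z_{k,\ell}$ are conditionally independent given the change-points with density $f_0$ if $k<\Gamma_\ell$ and $f_1$ if $k\ge\Gamma_\ell$, where $f_0,f_1$ are mutually absolutely continuous. $L_{k,j}=f_1(Z_{k,j})/f_0(Z_{k,j})$. $q_{k,\ell}=p_{k,\ell}/(\rho p_{k,1})$, $\ell=1,\dots,L+1$, where $p_{k,\ell}=P(\Gamma_1\le k,\dots,\Gamma_{\ell-1}\le k,\Gamma_\ell>k,\dots,\Gamma_L>k\mid\mathbf Z_1,\dots,\mathbf Z_k)$. Weights $w_m^\ell=\prod_{j=m-1}^{\ell-2}\rho_{j,j+1}$ ($1\le m\le\ell$; equal to $1$ if $m=\ell$). These satisfy $q_{k,1}=1/\rho$, $q_{0,\ell}=\frac{(1-\rho_{\ell-1,\ell})\prod_{j=0}^{\ell-2}\rho_{j,j+1}}{\rho(1-\rho)}$ for $\ell\ge2$, and for $k\ge1$: $q_{k,\ell}=\frac{1-\rho_{\ell-1,\ell}}{1-\rho}\prod_{j=1}^{\ell-1}L_{k,j}\sum_{j=1}^{\ell}q_{k-1,j}w_j^\ell$.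 *)

theory Defs
  imports Complex_Main
begin

text \<open>Conventions: r j stands for rho_{j,j+1} (so r 0 = rho, r L = 0);
  Lr k j stands for the likelihood ratio L_{k,j}; q k l stands for q_{k,l}.\<close>

definition wt :: "(nat \<Rightarrow> real) \<Rightarrow> nat \<Rightarrow> nat \<Rightarrow> real" where
  "wt r m l = (\<Prod>j\<in>{m-1..<l-1}. r j)"

definition Lam :: "(nat \<Rightarrow> nat \<Rightarrow> real) \<Rightarrow> nat \<Rightarrow> nat \<Rightarrow> real" where
  "Lam Lr k j = (\<Prod>m\<in>{1..k}. Lr m j)"

definition alpha :: "(nat \<Rightarrow> real) \<Rightarrow> nat \<Rightarrow> nat \<Rightarrow> real" where
  "alpha r k l = ((1 - r (l-1)) / (1 - r 0)) ^ k * (\<Prod>j\<in>{1..l-2}. r j)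
      * (\<Sum>j\<in>{0..l-1}. (1 - r j) / (1 - r 0))"

definition Bc :: "(nat \<Rightarrow> real) \<Rightarrow> (nat \<Rightarrow> nat \<Rightarrow> real) \<Rightarrow> nat \<Rightarrow> nat \<Rightarrow> nat \<Rightarrow> real" where
  "Bc r Lr m n l = (\<Sum>p\<in>{n-1..l-1}. (1 - r p) * (\<Prod>j\<in>{1..p}. Lr m j))"

definition Cc :: "(nat \<Rightarrow> real) \<Rightarrow> (nat \<Rightarrow> nat \<Rightarrow> real) \<Rightarrow> nat \<Rightarrow> nat \<Rightarrow> nat \<Rightarrow> real" where
  "Cc r Lr m n l = Bc r Lr m n l - (1 - r (l-1)) * (\<Prod>j\<in>{1..l-1}. Lr m j)"

definition zeta :: "(nat \<Rightarrow> real) \<Rightarrow> (nat \<Rightarrow> nat \<Rightarrow> real) \<Rightarrow> (nat \<Rightarrow> nat \<Rightarrow> real)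
    \<Rightarrow> nat \<Rightarrow> nat \<Rightarrow> real" where
  "zeta r Lr q m l =
     1 / ((1 - r (l-1)) * (\<Prod>j\<in>{1..l-1}. Lr (m+1) j))
     * ((\<Sum>j\<in>{1..l-1}. q m j * wt r j l * Cc r Lr (m+1) j l)
        / (\<Sum>j\<in>{1..l}. q m j * wt r j l))"

end

theory Submission
  imports Defs
begin

lemma swap_tri:
  fixes f :: "nat \<Rightarrow> nat \<Rightarrow> real"
  shows "(\<Sum>j\<in>{1..n}. \<Sum>i\<in>{j..n}. f j i) = (\<Sum>i\<in>{1..n}. \<Sum>j\<in>{1..i}. f j i)"
proof (induction n)
  case 0 then show ?case by simp
next
  case (Suc n)
  have "(\<Sum>j\<in>{1..Suc n}. \<Sum>i\<in>{j..Suc n}. f j i)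
      = (\<Sum>j\<in>{1..n}. \<Sum>i\<in>{j..Suc n}. f j i) + f (Suc n) (Suc n)"
    by (simp add: sum.nat_ivl_Suc')
  also have "(\<Sum>j\<in>{1..n}. \<Sum>i\<in>{j..Suc n}. f j i)
      = (\<Sum>j\<in>{1..n}. (\<Sum>i\<in>{j..n}. f j i) + f j (Suc n))"
    by (rule sum.cong) (auto simp: sum.nat_ivl_Suc')
  also have "\<dots> = (\<Sum>i\<in>{1..n}. \<Sum>j\<in>{1..i}. f j i) + (\<Sum>j\<in>{1..n}. f j (Suc n))"
    by (simp only: sum.distrib Suc.IH)
  finally show ?case by (simp add: sum.nat_ivl_Suc')
qed

theorem proposition6:
  fixes L :: nat and r :: "nat \<Rightarrow> real" and Lr :: "nat \<Rightarrow> nat \<Rightarrow> real"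
    and q :: "nat \<Rightarrow> nat \<Rightarrow> real"
  assumes "L \<ge> 1"
    and rho_bounds: "\<And>j. j < L \<Longrightarrow> 0 < r j \<and> r j < 1"
    and rho_last: "r L = 0"
    and Lr_pos: "\<And>k j. 1 \<le> k \<Longrightarrow> 1 \<le> j \<Longrightarrow> j \<le> L \<Longrightarrow> Lr k j > 0"
    and q_first: "\<And>k. q k 1 = 1 / r 0"
    and q_init: "\<And>l. 2 \<le> l \<Longrightarrow> l \<le> L + 1 \<Longrightarrow>
        q 0 l = (1 - r (l-1)) * (\<Prod>j\<in>{0..l-2}. r j) / (r 0 * (1 - r 0))"
    and q_rec: "\<And>k l. 1 \<le> k \<Longrightarrow> 2 \<le> l \<Longrightarrow> l \<le> L + 1 \<Longrightarrow>
        q k l = (1 - r (l-1)) / (1 - r 0) * (\<Prod>j\<in>{1..l-1}. Lr k j)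
                * (\<Sum>j\<in>{1..l}. q (k-1) j * wt r j l)"
    and "1 \<le> k" and "2 \<le> l" and "l \<le> L + 1"
  shows "q k l = alpha r k l * (\<Prod>j\<in>{1..l-1}. Lam Lr k j)
                 * (\<Prod>m\<in>{..<k-1}. 1 + zeta r Lr q m l)"
proof -
  note kl = \<open>1 \<le> k\<close> \<open>2 \<le> l\<close> \<open>l \<le> L + 1\<close>
  have rpos: "\<And>j. j < L \<Longrightarrow> 0 < r j" using rho_bounds by blast
  have omr: "0 < 1 - r j" if "j \<le> L" for j
    using rho_bounds[of j] rho_last that by (cases "j = L") auto
  have r0: "0 < r 0" "r 0 < 1" using rho_bounds[of 0] assms(1) by auto
  have wtpos: "0 < wt r j i" if "1 \<le> j" "i \<le> L+1" for j i
    unfolding wt_def by (rule prod_pos) (use rpos that in auto)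
  have wtmul: "wt r j i * wt r i l = wt r j l" if "1 \<le> j" "j \<le> i" "i \<le> l" for j i
    unfolding wt_def using that by (intro prod.atLeastLessThan_concat) auto
  have Lpos: "0 < (\<Prod>j\<in>{1..n}. Lr M j)" if "1 \<le> M" "n \<le> L" for M n
    by (rule prod_pos) (use Lr_pos that in auto)
  have qpos_all: "\<forall>i. 1 \<le> i \<and> i \<le> L+1 \<longrightarrow> 0 < q m i" for m
  proof (induction m)
    case 0
    show ?case
    proof (intro allI impI)
      fix i assume i: "1 \<le> i \<and> i \<le> L+1"
      show "0 < q 0 i"
      proof (cases "i = 1")
        case True then show ?thesis using q_first r0 by simp
      next
        case False
        then have i2: "2 \<le> i" using i by simp
        moreover have "0 < (\<Prod>j\<in>{0..i-2}. r j)"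
          by (rule prod_pos) (use rpos i i2 in auto)
        ultimately show ?thesis using q_init[of i] i omr[of "i-1"] r0 by simp
      qed
    qed
  next
    case (Suc m)
    show ?case
    proof (intro allI impI)
      fix i assume i: "1 \<le> i \<and> i \<le> L+1"
      show "0 < q (Suc m) i"
      proof (cases "i = 1")
        case True then show ?thesis using q_first r0 by simp
      next
        case False
        then have i2: "2 \<le> i" using i by simp
        have "0 < (\<Sum>j\<in>{1..i}. q m j * wt r j i)"
          by (rule sum_pos) (use i Suc.IH wtpos in auto)
        moreover have "0 < (\<Prod>j\<in>{1..i-1}. Lr (Suc m) j)" using Lpos[of "Suc m" "i-1"] i by auto
        ultimately show ?thesis using q_rec[of "Suc m" i] i i2 omr[of "i-1"] r0 by simp
      qed
    qed
  qed
  have qpos: "0 < q m i" if "1 \<le> i" "i \<le> L+1" for m i using qpos_all that by blast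
  define c where "c = (1 - r (l-1)) / (1 - r 0)"
  define P where "P M = (\<Prod>j\<in>{1..l-1}. Lr M j)" for M
  define S where "S m = (\<Sum>j\<in>{1..l}. q m j * wt r j l)" for m
  define N where "N m = (\<Sum>j\<in>{1..l-1}. q m j * wt r j l * Cc r Lr (m+1) j l)" for m
  have Spos: "0 < S m" for m
    unfolding S_def by (rule sum_pos) (use kl qpos wtpos in auto)
  have omr0: "0 < 1 - r 0" using r0 by simp
  have omrl: "0 < 1 - r (l-1)" using omr[of "l-1"] kl by simp
  have cpos: "0 < c" unfolding c_def using omr0 omrl by simp
  have Ppos: "0 < P (Suc m)" for m unfolding P_def using Lpos[of "Suc m" "l-1"] kl by auto
  have zeta_eq: "zeta r Lr q m l = N m / ((1 - r (l-1)) * P (m+1) * S m)" for m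
    unfolding zeta_def N_def P_def S_def by simp
  have Cc_eq: "Cc r Lr M j l = (\<Sum>i\<in>{j..l-1}. (1 - r (i-1)) * (\<Prod>t\<in>{1..i-1}. Lr M t))"
    if "1 \<le> j" "j \<le> l-1" for M j
  proof -
    have e1: "l - 1 = Suc (l-2)" using kl by simp
    have "Bc r Lr M j l = (\<Sum>p\<in>{j-1..l-2}. (1 - r p) * (\<Prod>t\<in>{1..p}. Lr M t))
         + (1 - r (l-1)) * (\<Prod>t\<in>{1..l-1}. Lr M t)"
      unfolding Bc_def e1 using that e1 by (subst sum.nat_ivl_Suc') auto
    moreover have "(\<Sum>p\<in>{j-1..l-2}. (1 - r p) * (\<Prod>t\<in>{1..p}. Lr M t))
       = (\<Sum>i\<in>{j..l-1}. (1 - r (i-1)) * (\<Prod>t\<in>{1..i-1}. Lr M t))"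
    proof -
      have e2: "j = Suc (j-1)" using that by simp
      show ?thesis by (subst e2, subst e1, subst sum.shift_bounds_cl_Suc_ivl) simp
    qed
    ultimately show ?thesis unfolding Cc_def by simp
  qed
  have key: "S (Suc m) = c * P (Suc m) * S m + N m / (1 - r 0)" for m
  proof -
    define F where "F j i = q m j * wt r j l * ((1 - r (i-1)) * (\<Prod>t\<in>{1..i-1}. Lr (Suc m) t))" for j i
    have e1: "l = Suc (l-1)" using kl by simp
    have A: "S (Suc m) = (\<Sum>i\<in>{1..l-1}. q (Suc m) i * wt r i l) + q (Suc m) l"
    proof -
      have "S (Suc m) = q (Suc m) (Suc (l-1)) * wt r (Suc (l-1)) l + (\<Sum>i\<in>{1..l-1}. q (Suc m) i * wt r i l)"
        unfolding S_def by (subst e1, subst sum.nat_ivl_Suc') (use kl in \<open>auto simp: e1[symmetric]\<close>)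
      moreover have "wt r l l = 1" unfolding wt_def by simp
      ultimately show ?thesis using e1 by simp
    qed
    have B: "q (Suc m) l = c * P (Suc m) * S m"
      using q_rec[of "Suc m" l] kl unfolding c_def P_def S_def by simp
    have C: "q (Suc m) i * wt r i l = (\<Sum>j\<in>{1..i}. F j i) / (1 - r 0)" if i: "i \<in> {1..l-1}" for i
    proof (cases "i = 1")
      case True then show ?thesis unfolding F_def using q_first omr0 by simp
    next
      case False
      then have i2: "2 \<le> i" using i by auto
      have "q (Suc m) i = (1 - r (i-1)) / (1 - r 0) * (\<Prod>t\<in>{1..i-1}. Lr (Suc m) t)
                * (\<Sum>j\<in>{1..i}. q m j * wt r j i)"
        using q_rec[of "Suc m" i] i2 i kl by simp
      moreover have "(\<Sum>j\<in>{1..i}. q m j * wt r j i) * wt r i l = (\<Sum>j\<in>{1..i}. q m j * wt r j l)"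
        unfolding sum_distrib_right by (rule sum.cong) (use wtmul i in \<open>auto simp: mult.assoc\<close>)
      ultimately have "q (Suc m) i * wt r i l = (1 - r (i-1)) / (1 - r 0) * (\<Prod>t\<in>{1..i-1}. Lr (Suc m) t)
                * (\<Sum>j\<in>{1..i}. q m j * wt r j l)" by (simp add: mult.assoc)
      then show ?thesis unfolding F_def sum_distrib_right sum_distrib_left sum_divide_distrib
        by (simp add: algebra_simps)
    qed
    have D: "N m = (\<Sum>j\<in>{1..l-1}. \<Sum>i\<in>{j..l-1}. F j i)"
      unfolding N_def F_def by (rule sum.cong) (use Cc_eq in \<open>auto simp: sum_distrib_left\<close>)
    have "N m / (1 - r 0) = (\<Sum>i\<in>{1..l-1}. q (Suc m) i * wt r i l)"
      unfolding D swap_tri sum_divide_distrib using C by (simp add: sum_divide_distrib)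
    then show ?thesis using A B by simp
  qed
  have one_zeta: "1 + zeta r Lr q m l = S (Suc m) / (c * P (Suc m) * S m)" for m
  proof -
    have "zeta r Lr q m l = (N m / (1 - r 0)) / (c * P (Suc m) * S m)"
    proof -
      have g: "(n / b) / ((a / b) * x) = n / (a * x)" if "b \<noteq> 0" for n a b x :: real
        using that by (simp add: field_simps)
      show ?thesis unfolding zeta_eq c_def using g[of "1 - r 0" "N m" "1 - r (l-1)" "P (Suc m) * S m"] omr0
        by (simp add: mult.assoc)
    qed
    moreover have "c * P (Suc m) * S m \<noteq> 0" using cpos Ppos[of m] Spos[of m] by simp
    ultimately show ?thesis unfolding key by (simp add: add_divide_distrib)
  qed
  have Sform: "S n = S 0 * c^n * (\<Prod>M\<in>{1..n}. P M) * (\<Prod>m<n. 1 + zeta r Lr q m l)" for n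
  proof (induction n)
    case 0 then show ?case by simp
  next
    case (Suc n)
    have "S (Suc n) = c * P (Suc n) * S n * (1 + zeta r Lr q n l)"
      unfolding one_zeta using cpos Ppos[of n] Spos[of n] by simp
    then show ?case unfolding Suc.IH by (simp add: prod.nat_ivl_Suc' algebra_simps)
  qed
  have S0: "S 0 = (\<Prod>j\<in>{1..l-2}. r j) * (\<Sum>j\<in>{0..l-1}. (1 - r j) / (1 - r 0))"
  proof -
    define R where "R = (\<Prod>j\<in>{1..l-2}. r j)"
    have R0: "(\<Prod>j\<in>{0..<l-1}. r j) = r 0 * R"
    proof -
      have "l - 1 = Suc (l-2)" using kl by simp
      then have "{0..<l-1} = insert 0 {1..l-2}" by auto
      then show ?thesis unfolding R_def by simp
    qed
    have t1: "q 0 1 * wt r 1 l = R" unfolding wt_def using q_first R0 r0 by simp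
    have t2: "q 0 j * wt r j l = (1 - r (j-1)) / (1 - r 0) * R" if j: "j \<in> {2..l}" for j
    proof -
      have "(\<Prod>i\<in>{0..j-2}. r i) * wt r j l = (\<Prod>i\<in>{0..<l-1}. r i)"
      proof -
        have "{0..j-2} = {0..<j-1}" using j by auto
        then show ?thesis unfolding wt_def using j by (simp, intro prod.atLeastLessThan_concat) auto
      qed
      moreover have "q 0 j = (1 - r (j-1)) * (\<Prod>i\<in>{0..j-2}. r i) / (r 0 * (1 - r 0))"
        using q_init[of j] j kl by simp
      ultimately have "q 0 j * wt r j l = (1 - r (j-1)) * (r 0 * R) / (r 0 * (1 - r 0))"
        using R0 by (simp add: mult.assoc)
      then show ?thesis using r0 omr0 by simp
    qed
    have s1: "S 0 = q 0 1 * wt r 1 l + (\<Sum>j\<in>{2..l}. q 0 j * wt r j l)"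
      unfolding S_def using kl by (subst atLeastAtMost_insertL[symmetric]) (auto simp: numeral_2_eq_2)
    have s2: "(\<Sum>j\<in>{2..l}. q 0 j * wt r j l) = R * (\<Sum>j\<in>{2..l}. (1 - r (j-1)) / (1 - r 0))"
      unfolding sum_distrib_left using t2 by (intro sum.cong) auto
    have s3: "(\<Sum>j\<in>{2..l}. (1 - r (j-1)) / (1 - r 0)) = (\<Sum>j\<in>{1..l-1}. (1 - r j) / (1 - r 0))"
    proof -
      have e: "l = Suc (l-1)" using kl by auto
      have "(\<Sum>j\<in>{Suc 1..Suc (l-1)}. (1 - r (j-1)) / (1 - r 0)) = (\<Sum>j\<in>{1..l-1}. (1 - r j) / (1 - r 0))"
        by (subst sum.shift_bounds_cl_Suc_ivl) simp
      then show ?thesis using e by (simp add: numeral_2_eq_2)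
    qed
    have s4: "(\<Sum>j\<in>{0..l-1}. (1 - r j) / (1 - r 0)) = 1 + (\<Sum>j\<in>{1..l-1}. (1 - r j) / (1 - r 0))"
      using omr0 by (subst atLeastAtMost_insertL[symmetric]) auto
    show ?thesis unfolding R_def[symmetric] s1 s2 s3 s4 t1 by (simp add: algebra_simps)
  qed
  have qk: "q k l = c * P k * S (k-1)"
    using q_rec[of k l] kl unfolding c_def P_def S_def by simp
  have LamP: "(\<Prod>j\<in>{1..l-1}. Lam Lr k j) = (\<Prod>M\<in>{1..k}. P M)"
    unfolding Lam_def P_def by (rule prod.swap)
  have ek: "k = Suc (k-1)" using kl by simp
  have alpha_eq: "alpha r k l = c ^ k * S 0" unfolding alpha_def S0 c_def by simp
  have "q k l = c * P (Suc (k-1)) * S (k-1)" using qk ek by simp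
  also have "\<dots> = c ^ Suc (k-1) * S 0 * (\<Prod>M\<in>{1..Suc (k-1)}. P M) * (\<Prod>m<k-1. 1 + zeta r Lr q m l)"
    unfolding Sform[of "k-1"] by (simp add: prod.nat_ivl_Suc' algebra_simps)
  finally show ?thesis unfolding LamP alpha_eq using ek by simp
qed
end
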